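(* Consider the model described in the context and suppose the Lipschitz assumption holds. Then for every $t\in\mathbb N_T$ there exists a constant $K_t>0$ such that for all $z_1,z_2\in\Delta(\mathcal X)$, $$|\hat V_t(z_1)-\hat V_t(z_2)|\le K_t\|z_1-z_2\|_\infty.$$
   Context: Let $T\in\mathbb N$, $\mathbb N_T=\{1,\dots,T\}$, and let $\mathcal X,\mathcal U,\mathcal W$ be finite sets. Let $\mathcal I(\mathcal X)=[0,1]^{\mathcal X}$ and $\Delta(\mathcal X)$ the set of probability vectors on $\mathcal X$. For each $t$ let $f_t:\mathcal X\times\mathcal U\times\mathcal W\times\mathcal I(\mathcal X)\to\mathcal X$, let $\mathbb P(w_t=\cdot)$ be a probability law on $\mathcal W$, and define transition probabilities $\mathbb P(y\mid x,u,z)=\sum_{w\in\mathcal W}\mathbb 1(f_t(x,u,w,z)=y)\,\mathbb P(w_t=w)$; let $\ell_t:\mathcal X\times\mathcal U\times\mathcal I(\mathcal X)\to\mathbb R_{\ge0}$ be cost functions. Lipschitz assumption: there exist $K^1_t,K^2_t>0$ with $|\mathbb P(y|x,u,z_1)-\mathbb P(y|x,u,z_2)|\le K^1_t\|z_1-z_2\|_\infty$ and $|\ell_t(x,u,z_1)-\ell_t(x,u,z_2)|\le K^2_t\|z_1-z_2\|_\infty$ for all $x,y,u$ and $z_1,z_2\in\mathcal I(\mathcal X)$. $\mathcal G$ is the set of all maps $\gamma:\mathcal X\to\mathcal U$. Define $\hat f_t(z,\gamma)(y)=\sum_x z(x)\mathbb P(y|x,\gamma(x),z)$, $\hat c_t(z,\gamma)=\sum_x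 z(x)\ell_t(x,\gamma(x),z)$, and $\hat V_t:\Delta(\mathcal X)\to\mathbb R$ by $\hat V_{T+1}\equiv0$, $\hat V_t(z)=\min_{\gamma\in\mathcal G}\big(\hat c_t(z,\gamma)+\hat V_{t+1}(\hat f_t(z,\gamma))\big)$, $t=T,\dots,1$. *)

theory Defs
  imports Main Complex_Main
begin

text \<open>The finite sets X, U, W are finite types 'x, 'u, 'w.
  f :: time => x => u => w => (x => real) => x   (dynamics f_t)
  pw :: time => w => real                          (law of w_t)
  l :: time => x => u => (x => real) => real      (cost l_t)\<close>

definition sup_norm :: "('x::finite \<Rightarrow> real) \<Rightarrow> real" where
  "sup_norm z = Max (range (\<lambda>x. \<bar>z x\<bar>))"

definition Ibox :: "('x \<Rightarrow> real) set" where
  "Ibox = {z. \<forall>x. 0 \<le> z x \<and> z x \<le> 1}"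

definition Simplex :: "('x::finite \<Rightarrow> real) set" where
  "Simplex = {z. (\<forall>x. 0 \<le> z x) \<and> sum z UNIV = 1}"

definition Ptrans ::
  "(nat \<Rightarrow> 'x \<Rightarrow> 'u \<Rightarrow> 'w::finite \<Rightarrow> ('x \<Rightarrow> real) \<Rightarrow> 'x) \<Rightarrow> (nat \<Rightarrow> 'w \<Rightarrow> real)
   \<Rightarrow> nat \<Rightarrow> 'x \<Rightarrow> 'x \<Rightarrow> 'u \<Rightarrow> ('x \<Rightarrow> real) \<Rightarrow> real" where
  "Ptrans f pw t y x u z = (\<Sum>w\<in>UNIV. (if f t x u w z = y then 1 else 0) * pw t w)"

definition fhat ::
  "(nat \<Rightarrow> 'x::finite \<Rightarrow> 'u \<Rightarrow> 'w::finite \<Rightarrow> ('x \<Rightarrow> real) \<Rightarrow> 'x) \<Rightarrow> (nat \<Rightarrow> 'w \<Rightarrow> real)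
   \<Rightarrow> nat \<Rightarrow> ('x \<Rightarrow> real) \<Rightarrow> ('x \<Rightarrow> 'u) \<Rightarrow> ('x \<Rightarrow> real)" where
  "fhat f pw t z \<gamma> = (\<lambda>y. \<Sum>x\<in>UNIV. z x * Ptrans f pw t y x (\<gamma> x) z)"

definition chat ::
  "(nat \<Rightarrow> 'x::finite \<Rightarrow> 'u \<Rightarrow> ('x \<Rightarrow> real) \<Rightarrow> real)
   \<Rightarrow> nat \<Rightarrow> ('x \<Rightarrow> real) \<Rightarrow> ('x \<Rightarrow> 'u) \<Rightarrow> real" where
  "chat l t z \<gamma> = (\<Sum>x\<in>UNIV. z x * l t x (\<gamma> x) z)"

text \<open>Backward recursion: Vrec n t z is the value with n stages remaining starting at time t.\<close>
primrec Vrec ::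
  "(nat \<Rightarrow> 'x::finite \<Rightarrow> 'u::finite \<Rightarrow> 'w::finite \<Rightarrow> ('x \<Rightarrow> real) \<Rightarrow> 'x) \<Rightarrow> (nat \<Rightarrow> 'w \<Rightarrow> real)
   \<Rightarrow> (nat \<Rightarrow> 'x \<Rightarrow> 'u \<Rightarrow> ('x \<Rightarrow> real) \<Rightarrow> real)
   \<Rightarrow> nat \<Rightarrow> nat \<Rightarrow> ('x \<Rightarrow> real) \<Rightarrow> real" where
  "Vrec f pw l 0 t z = 0"
| "Vrec f pw l (Suc n) t z =
     Min (range (\<lambda>\<gamma>. chat l t z \<gamma> + Vrec f pw l n (Suc t) (fhat f pw t z \<gamma>)))"

definition Vhat ::
  "(nat \<Rightarrow> 'x::finite \<Rightarrow> 'u::finite \<Rightarrow> 'w::finite \<Rightarrow> ('x \<Rightarrow> real) \<Rightarrow> 'x) \<Rightarrow> (nat \<Rightarrow> 'w \<Rightarrow> real)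
   \<Rightarrow> (nat \<Rightarrow> 'x \<Rightarrow> 'u \<Rightarrow> ('x \<Rightarrow> real) \<Rightarrow> real)
   \<Rightarrow> nat \<Rightarrow> nat \<Rightarrow> ('x \<Rightarrow> real) \<Rightarrow> real" where
  "Vhat f pw l T t = Vrec f pw l (T + 1 - t) t"

lemma Vhat_last: "Vhat f pw l T (T+1) z = 0"
  by (simp add: Vhat_def)

lemma Vhat_step:
  assumes "t \<le> T"
  shows "Vhat f pw l T t z =
     Min (range (\<lambda>\<gamma>. chat l t z \<gamma> + Vhat f pw l T (Suc t) (fhat f pw t z \<gamma>)))"
proof -
  have "T + 1 - t = Suc (T + 1 - Suc t)" using assms by simp
  then show ?thesis by (simp add: Vhat_def)
qed

end

theory Submission
  imports Defs
begin

lemma sn_ge: "\<bar>z x\<bar> \<le> sup_norm (z::'x::finite \<Rightarrow> real)"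
  unfolding sup_norm_def by (rule Max_ge) auto

lemma sn_le: "(\<And>x. \<bar>z x\<bar> \<le> B) \<Longrightarrow> sup_norm (z::'x::finite \<Rightarrow> real) \<le> B"
  unfolding sup_norm_def by (subst Max_le_iff) auto

lemma sn_nonneg: "0 \<le> sup_norm (z::'x::finite \<Rightarrow> real)"
  using sn_ge[of z undefined] by linarith

lemma Simplex_Ibox: "z \<in> Simplex \<Longrightarrow> z \<in> Ibox"
proof -
  assume z: "z \<in> Simplex"
  { fix x
    have "z x \<le> sum z UNIV" using z by (intro member_le_sum) (auto simp: Simplex_def)
    then have "z x \<le> 1" using z by (simp add: Simplex_def) }
  then show ?thesis using z by (auto simp: Simplex_def Ibox_def)
qed

lemma Ibox_sn: "z \<in> Ibox \<Longrightarrow> sup_norm (z::'x::finite \<Rightarrow> real) \<le> 1"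
  by (rule sn_le) (auto simp: Ibox_def)

lemma Ptrans_nonneg: "\<forall>t w. 0 \<le> pw t w \<Longrightarrow> 0 \<le> Ptrans f pw t y x u z"
  unfolding Ptrans_def by (intro sum_nonneg) auto

lemma Ptrans_sum:
  fixes f :: "nat \<Rightarrow> 'x::finite \<Rightarrow> 'u \<Rightarrow> 'w::finite \<Rightarrow> ('x \<Rightarrow> real) \<Rightarrow> 'x"
  shows "(\<Sum>y\<in>UNIV. Ptrans f pw t y x u z) = (\<Sum>w\<in>UNIV. pw t w)"
proof -
  have "(\<Sum>y\<in>UNIV. Ptrans f pw t y x u z)
      = (\<Sum>w\<in>UNIV. \<Sum>y\<in>UNIV. (if f t x u w z = y then 1 else 0) * pw t w)"
    unfolding Ptrans_def by (rule sum.swap)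
  also have "\<dots> = (\<Sum>w\<in>UNIV. pw t w)"
  proof (rule sum.cong)
    fix w
    have "(\<Sum>y\<in>UNIV. (if f t x u w z = y then 1 else 0) * pw t w)
        = (\<Sum>y\<in>UNIV. (if f t x u w z = y then pw t w else 0))"
      by (rule sum.cong) auto
    then show "(\<Sum>y\<in>UNIV. (if f t x u w z = y then 1 else 0) * pw t w) = pw t w"
      by simp
  qed simp
  finally show ?thesis .
qed

lemma Ptrans_le1:
  fixes f :: "nat \<Rightarrow> 'x::finite \<Rightarrow> 'u \<Rightarrow> 'w::finite \<Rightarrow> ('x \<Rightarrow> real) \<Rightarrow> 'x"
  assumes "\<forall>t w. 0 \<le> pw t w" "\<forall>t. (\<Sum>w\<in>UNIV. pw t w) = 1"
  shows "Ptrans f pw t y x u z \<le> 1"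
proof -
  have "Ptrans f pw t y x u z \<le> (\<Sum>y\<in>UNIV. Ptrans f pw t y x u z)"
    using Ptrans_nonneg[OF assms(1)] by (intro member_le_sum) auto
  then show ?thesis using Ptrans_sum assms(2) by metis
qed

lemma fhat_Simplex:
  fixes f :: "nat \<Rightarrow> 'x::finite \<Rightarrow> 'u \<Rightarrow> 'w::finite \<Rightarrow> ('x \<Rightarrow> real) \<Rightarrow> 'x"
  assumes "\<forall>t w. 0 \<le> pw t w" "\<forall>t. (\<Sum>w\<in>UNIV. pw t w) = 1" "z \<in> Simplex"
  shows "fhat f pw t z \<gamma> \<in> Simplex"
proof -
  have nn: "\<forall>y. 0 \<le> fhat f pw t z \<gamma> y"
    using assms Ptrans_nonneg[OF assms(1)]
    by (auto simp: fhat_def Simplex_def intro!: sum_nonneg mult_nonneg_nonneg)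
  have "sum (fhat f pw t z \<gamma>) UNIV
       = (\<Sum>x\<in>UNIV. \<Sum>y\<in>UNIV. z x * Ptrans f pw t y x (\<gamma> x) z)"
    unfolding fhat_def by (rule sum.swap)
  also have "\<dots> = (\<Sum>x\<in>UNIV. z x)"
    by (simp add: sum_distrib_left[symmetric] Ptrans_sum assms(2))
  also have "\<dots> = 1" using assms(3) by (simp add: Simplex_def)
  finally show ?thesis using nn by (simp add: Simplex_def)
qed

lemma min_lip:
  fixes g1 g2 :: "'g::finite \<Rightarrow> real"
  assumes "\<And>\<gamma>. \<bar>g1 \<gamma> - g2 \<gamma>\<bar> \<le> B"
  shows "\<bar>Min (range g1) - Min (range g2)\<bar> \<le> B"
proof -
  have "Min (range g1) \<in> range g1" by (rule Min_in) auto
  then obtain a where a: "Min (range g1) = g1 a" by blast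
  have "Min (range g2) \<in> range g2" by (rule Min_in) auto
  then obtain b where b: "Min (range g2) = g2 b" by blast
  have "Min (range g1) \<le> g1 b" by (rule Min_le) auto
  moreover have "Min (range g2) \<le> g2 a" by (rule Min_le) auto
  moreover note assms[of a] assms[of b]
  ultimately show ?thesis using a b by (auto simp: abs_le_iff)
qed

lemma mix_lip:
  fixes z1 z2 :: "'x::finite \<Rightarrow> real"
  assumes z1: "z1 \<in> Simplex" and z2: "z2 \<in> Simplex"
    and M: "\<And>x. \<bar>g1 x\<bar> \<le> M"
    and K: "\<And>x. \<bar>g1 x - g2 x\<bar> \<le> K * sup_norm (z1 - z2)"
  shows "\<bar>(\<Sum>x\<in>UNIV. z1 x * g1 x) - (\<Sum>x\<in>UNIV. z2 x * g2 x)\<bar>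
     \<le> (real (card (UNIV :: 'x set)) * M + K) * sup_norm (z1 - z2)"
proof -
  let ?s = "sup_norm (z1 - z2)"
  have "(\<Sum>x\<in>UNIV. z1 x * g1 x) - (\<Sum>x\<in>UNIV. z2 x * g2 x)
     = (\<Sum>x\<in>UNIV. (z1 x - z2 x) * g1 x + z2 x * (g1 x - g2 x))"
    by (simp add: sum_subtractf[symmetric] algebra_simps)
  also have "\<bar>\<dots>\<bar> \<le> (\<Sum>x\<in>UNIV. \<bar>(z1 x - z2 x) * g1 x + z2 x * (g1 x - g2 x)\<bar>)"
    by (rule sum_abs)
  also have "\<dots> \<le> (\<Sum>x\<in>UNIV. ?s * M + z2 x * (K * ?s))"
  proof (rule sum_mono)
    fix x
    have z2x: "0 \<le> z2 x" using z2 by (simp add: Simplex_def)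
    have "\<bar>z1 x - z2 x\<bar> \<le> ?s" using sn_ge[of "z1 - z2" x] by simp
    then have "\<bar>(z1 x - z2 x) * g1 x\<bar> \<le> ?s * M"
      unfolding abs_mult by (intro mult_mono M) (auto simp: sn_nonneg)
    moreover have "\<bar>z2 x * (g1 x - g2 x)\<bar> \<le> z2 x * (K * ?s)"
      unfolding abs_mult using z2x K[of x] by (simp add: mult_left_mono)
    ultimately show "\<bar>(z1 x - z2 x) * g1 x + z2 x * (g1 x - g2 x)\<bar> \<le> ?s * M + z2 x * (K * ?s)"
      using abs_triangle_ineq[of "(z1 x - z2 x) * g1 x" "z2 x * (g1 x - g2 x)"] by linarith
  qed
  also have "\<dots> = real (card (UNIV :: 'x set)) * ?s * M + (\<Sum>x\<in>UNIV. z2 x) * (K * ?s)"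
    by (simp add: sum.distrib sum_distrib_right)
  also have "\<dots> = (real (card (UNIV :: 'x set)) * M + K) * sup_norm (z1 - z2)"
    using z2 by (simp add: Simplex_def algebra_simps)
  finally show ?thesis .
qed

lemma step_lip:
  fixes f :: "nat \<Rightarrow> 'x::finite \<Rightarrow> 'u::finite \<Rightarrow> 'w::finite \<Rightarrow> ('x \<Rightarrow> real) \<Rightarrow> 'x"
    and pw :: "nat \<Rightarrow> 'w \<Rightarrow> real"
    and l :: "nat \<Rightarrow> 'x \<Rightarrow> 'u \<Rightarrow> ('x \<Rightarrow> real) \<Rightarrow> real"
    and V :: "('x \<Rightarrow> real) \<Rightarrow> real"
  assumes pw_nonneg: "\<forall>t w. 0 \<le> pw t w"
    and pw_sum: "\<forall>t. (\<Sum>w\<in>UNIV. pw t w) = 1"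
    and K1: "K1 > 0" "\<forall>x y u z1 z2. z1 \<in> Ibox \<longrightarrow> z2 \<in> Ibox \<longrightarrow>
           \<bar>Ptrans f pw t y x u z1 - Ptrans f pw t y x u z2\<bar> \<le> K1 * sup_norm (z1 - z2)"
    and K2: "K2 > 0" "\<forall>x u z1 z2. z1 \<in> Ibox \<longrightarrow> z2 \<in> Ibox \<longrightarrow>
           \<bar>l t x u z1 - l t x u z2\<bar> \<le> K2 * sup_norm (z1 - z2)"
    and KV: "KV > 0" "\<forall>z1\<in>Simplex. \<forall>z2\<in>Simplex. \<bar>V z1 - V z2\<bar> \<le> KV * sup_norm (z1 - z2)"
  shows "\<exists>K>0. \<forall>z1\<in>Simplex. \<forall>z2\<in>Simplex.
     \<bar>Min (range (\<lambda>\<gamma>. chat l t z1 \<gamma> + V (fhat f pw t z1 \<gamma>)))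
      - Min (range (\<lambda>\<gamma>. chat l t z2 \<gamma> + V (fhat f pw t z2 \<gamma>)))\<bar> \<le> K * sup_norm (z1 - z2)"
proof -
  define M where "M = (\<Sum>p\<in>UNIV. \<bar>l t (fst p) (snd p) (\<lambda>_. 0)\<bar>) + K2"
  have zI: "(\<lambda>_. 0) \<in> Ibox" by (simp add: Ibox_def)
  have Mb: "\<bar>l t x u z\<bar> \<le> M" if "z \<in> Ibox" for x u z
  proof -
    have e: "z - (\<lambda>_. 0) = z" by (rule ext) simp
    have "\<bar>l t x u z - l t x u (\<lambda>_. 0)\<bar> \<le> K2 * sup_norm (z - (\<lambda>_. 0))"
      using K2(2) that zI by blast
    also have "\<dots> \<le> K2 * 1" unfolding e
      using Ibox_sn[OF that] K2(1) by (intro mult_left_mono) auto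
    finally have 1: "\<bar>l t x u z - l t x u (\<lambda>_. 0)\<bar> \<le> K2" by simp
    have "\<bar>l t x u (\<lambda>_. 0)\<bar> \<le> (\<Sum>p\<in>UNIV. \<bar>l t (fst p) (snd p) (\<lambda>_. 0)\<bar>)"
      using member_le_sum[of "(x,u)" UNIV "\<lambda>p. \<bar>l t (fst p) (snd p) (\<lambda>_. 0)\<bar>"] by simp
    with 1 show ?thesis unfolding M_def by linarith
  qed
  have M0: "0 \<le> M" using Mb[OF zI] by (meson abs_ge_zero order_trans)
  define K where "K = (real (card (UNIV :: 'x set)) * M + K2) + KV * (real (card (UNIV :: 'x set)) * 1 + K1)"
  have a1: "0 \<le> real (card (UNIV :: 'x set)) * M" using M0 by simp
  have a2: "0 < KV * (real (card (UNIV :: 'x set)) * 1 + K1)"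
    using KV(1) K1(1) by (intro mult_pos_pos) auto
  have Kpos: "K > 0" unfolding K_def using a1 a2 K2(1) by linarith
  show ?thesis
  proof (intro exI[of _ K] conjI Kpos ballI)
    fix z1 z2 :: "'x \<Rightarrow> real" assume z1: "z1 \<in> Simplex" and z2: "z2 \<in> Simplex"
    have I1: "z1 \<in> Ibox" and I2: "z2 \<in> Ibox" using z1 z2 Simplex_Ibox by auto
    let ?s = "sup_norm (z1 - z2)"
    show "\<bar>Min (range (\<lambda>\<gamma>. chat l t z1 \<gamma> + V (fhat f pw t z1 \<gamma>)))
      - Min (range (\<lambda>\<gamma>. chat l t z2 \<gamma> + V (fhat f pw t z2 \<gamma>)))\<bar> \<le> K * ?s"
    proof (rule min_lip)
      fix \<gamma> :: "'x \<Rightarrow> 'u"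
      have c: "\<bar>chat l t z1 \<gamma> - chat l t z2 \<gamma>\<bar> \<le> (real (card (UNIV :: 'x set)) * M + K2) * ?s"
        unfolding chat_def
        by (rule mix_lip[OF z1 z2]) (use Mb I1 I2 K2(2) in auto)
      have Pb: "\<bar>Ptrans f pw t y x u z\<bar> \<le> 1" for y x u z
      proof -
        have "0 \<le> Ptrans f pw t y x u z" by (rule Ptrans_nonneg[OF pw_nonneg])
        moreover have "Ptrans f pw t y x u z \<le> 1" by (rule Ptrans_le1[OF pw_nonneg pw_sum])
        ultimately show ?thesis by simp
      qed
      have fy: "\<bar>fhat f pw t z1 \<gamma> y - fhat f pw t z2 \<gamma> y\<bar> \<le> (real (card (UNIV :: 'x set)) * 1 + K1) * ?s" for y
        unfolding fhat_def
        by (rule mix_lip[OF z1 z2])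
          (use I1 I2 K1(2) Pb in auto)
      have fs: "sup_norm (fhat f pw t z1 \<gamma> - fhat f pw t z2 \<gamma>) \<le> (real (card (UNIV :: 'x set)) * 1 + K1) * ?s"
        by (rule sn_le) (use fy in simp)
      have "\<bar>V (fhat f pw t z1 \<gamma>) - V (fhat f pw t z2 \<gamma>)\<bar>
          \<le> KV * sup_norm (fhat f pw t z1 \<gamma> - fhat f pw t z2 \<gamma>)"
        using KV(2) fhat_Simplex[OF pw_nonneg pw_sum z1] fhat_Simplex[OF pw_nonneg pw_sum z2] by blast
      also have "\<dots> \<le> KV * ((real (card (UNIV :: 'x set)) * 1 + K1) * ?s)"
        using fs KV(1) by (intro mult_left_mono) auto
      finally have v: "\<bar>V (fhat f pw t z1 \<gamma>) - V (fhat f pw t z2 \<gamma>)\<bar>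
          \<le> KV * (real (card (UNIV :: 'x set)) * 1 + K1) * ?s" by simp
      show "\<bar>(chat l t z1 \<gamma> + V (fhat f pw t z1 \<gamma>)) - (chat l t z2 \<gamma> + V (fhat f pw t z2 \<gamma>))\<bar> \<le> K * ?s"
        using c v unfolding K_def by (simp add: algebra_simps abs_le_iff)
    qed
  qed
qed

lemma Vrec_lip:
  fixes f :: "nat \<Rightarrow> 'x::finite \<Rightarrow> 'u::finite \<Rightarrow> 'w::finite \<Rightarrow> ('x \<Rightarrow> real) \<Rightarrow> 'x"
    and pw :: "nat \<Rightarrow> 'w \<Rightarrow> real"
    and l :: "nat \<Rightarrow> 'x \<Rightarrow> 'u \<Rightarrow> ('x \<Rightarrow> real) \<Rightarrow> real"
  assumes pw_nonneg: "\<forall>t w. 0 \<le> pw t w"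
    and pw_sum: "\<forall>t. (\<Sum>w\<in>UNIV. pw t w) = 1"
    and lipschitz: "\<forall>t\<in>{1..T}. \<exists>K1 K2. K1 > 0 \<and> K2 > 0 \<and>
        (\<forall>x y u z1 z2. z1 \<in> Ibox \<longrightarrow> z2 \<in> Ibox \<longrightarrow>
           \<bar>Ptrans f pw t y x u z1 - Ptrans f pw t y x u z2\<bar> \<le> K1 * sup_norm (z1 - z2)) \<and>
        (\<forall>x u z1 z2. z1 \<in> Ibox \<longrightarrow> z2 \<in> Ibox \<longrightarrow>
           \<bar>l t x u z1 - l t x u z2\<bar> \<le> K2 * sup_norm (z1 - z2))"
  shows "1 \<le> t \<Longrightarrow> t + n \<le> T + 1 \<Longrightarrow> \<exists>K > 0. \<forall>z1\<in>Simplex. \<forall>z2\<in>Simplex.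
           \<bar>Vrec f pw l n t z1 - Vrec f pw l n t z2\<bar> \<le> K * sup_norm (z1 - z2)"
proof (induction n arbitrary: t)
  case 0
  then show ?case by (intro exI[of _ 1]) (auto simp: sn_nonneg)
next
  case (Suc n)
  then obtain KV where KV: "KV > 0" "\<forall>z1\<in>Simplex. \<forall>z2\<in>Simplex.
     \<bar>Vrec f pw l n (Suc t) z1 - Vrec f pw l n (Suc t) z2\<bar> \<le> KV * sup_norm (z1 - z2)"
    by fastforce
  have "t \<in> {1..T}" using Suc.prems by auto
  then obtain K1 K2 where K: "K1 > 0" "K2 > 0"
    "\<forall>x y u z1 z2. z1 \<in> Ibox \<longrightarrow> z2 \<in> Ibox \<longrightarrow>
           \<bar>Ptrans f pw t y x u z1 - Ptrans f pw t y x u z2\<bar> \<le> K1 * sup_norm (z1 - z2)"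
    "\<forall>x u z1 z2. z1 \<in> Ibox \<longrightarrow> z2 \<in> Ibox \<longrightarrow>
           \<bar>l t x u z1 - l t x u z2\<bar> \<le> K2 * sup_norm (z1 - z2)"
    using lipschitz by blast
  show ?case
    unfolding Vrec.simps by (rule step_lip[where V="Vrec f pw l n (Suc t)" and f=f and pw=pw and l=l and t=t, OF pw_nonneg pw_sum K(1,3) K(2,4) KV])
qed

theorem proposition1:
  fixes T :: nat
    and f :: "nat \<Rightarrow> 'x::finite \<Rightarrow> 'u::finite \<Rightarrow> 'w::finite \<Rightarrow> ('x \<Rightarrow> real) \<Rightarrow> 'x"
    and pw :: "nat \<Rightarrow> 'w \<Rightarrow> real"
    and l :: "nat \<Rightarrow> 'x \<Rightarrow> 'u \<Rightarrow> ('x \<Rightarrow> real) \<Rightarrow> real"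
  assumes pw_nonneg: "\<forall>t w. 0 \<le> pw t w"
    and pw_sum: "\<forall>t. (\<Sum>w\<in>UNIV. pw t w) = 1"
    and l_nonneg: "\<forall>t x u z. z \<in> Ibox \<longrightarrow> 0 \<le> l t x u z"
    and lipschitz: "\<forall>t\<in>{1..T}. \<exists>K1 K2. K1 > 0 \<and> K2 > 0 \<and>
        (\<forall>x y u z1 z2. z1 \<in> Ibox \<longrightarrow> z2 \<in> Ibox \<longrightarrow>
           \<bar>Ptrans f pw t y x u z1 - Ptrans f pw t y x u z2\<bar> \<le> K1 * sup_norm (z1 - z2)) \<and>
        (\<forall>x u z1 z2. z1 \<in> Ibox \<longrightarrow> z2 \<in> Ibox \<longrightarrow>
           \<bar>l t x u z1 - l t x u z2\<bar> \<le> K2 * sup_norm (z1 - z2))"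
  shows "\<forall>t\<in>{1..T}. \<exists>K > 0. \<forall>z1\<in>Simplex. \<forall>z2\<in>Simplex.
           \<bar>Vhat f pw l T t z1 - Vhat f pw l T t z2\<bar> \<le> K * sup_norm (z1 - z2)"
proof
  fix t assume t: "t \<in> {1..T}"
  then have "1 \<le> t" "t + (T + 1 - t) \<le> T + 1" by auto
  from Vrec_lip[OF pw_nonneg pw_sum lipschitz this] show "\<exists>K > 0. \<forall>z1\<in>Simplex. \<forall>z2\<in>Simplex.
           \<bar>Vhat f pw l T t z1 - Vhat f pw l T t z2\<bar> \<le> K * sup_norm (z1 - z2)"
    by (simp add: Vhat_def)
qed

end
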